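(* For every prime $k\ge5$ there exists a family $F$ of functions with codomain $\{0,1,\dots,k-1\}$ such that $\mathrm{opt}_{\mathrm{ag}}(F,\eta)\ge(0.5-o(1))\big((k\ln k)\,\mathrm{opt}_{\mathrm{std}}(F)+k\eta\big)$, where the $o(1)$ term tends to $0$ as $k\to\infty$.
   Context: Let $F$ be a family of functions from a set $X$ to a set $Y$. Online learning of $F$ is a game between a learner and an adversary: the adversary secretly fixes some $f\in F$ and presents inputs $x_1,x_2,\dots\in X$ one at a time, chosen adaptively; after each input $x_t$ the learner guesses a value for $f(x_t)$; a mistake is an incorrect guess. In the standard model, after each guess the adversary reveals $f(x_t)$, and $\mathrm{opt}_{\mathrm{std}}(F)$ is the maximum number of mistakes under optimal play by both sides. In the agnostic model with parameter $\eta\ge0$ (an integer), after each guess the adversary only says YES or NO, but may give incorrect feedback in up to $\eta$ rounds; $\mathrm{opt}_{\mathrm{ag}}(F,\eta)$ is the worst-case number of mistakes of the learner (with respect to the chosen $f$) when both learner and adversary play optimally. *)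

theory Defs
  imports "HOL-Analysis.Analysis" "HOL-Computational_Algebra.Primes"
begin

text \<open>The adversary is adaptive: the state is the
version space V of functions in F consistent with all revealed labels.
std_forces X Y V m: the adversary can force at least m (further) mistakes against
every deterministic learner whose guesses range over the codomain Y.
Inductive (least fixed point) = the adversary wins the open game
"at least m mistakes occur at some finite time".\<close>

inductive std_forces :: "'x set \<Rightarrow> 'y set \<Rightarrow> ('x \<Rightarrow> 'y) set \<Rightarrow> nat \<Rightarrow> bool"
  for X :: "'x set" and Y :: "'y set" where
  std_base: "V \<noteq> {} \<Longrightarrow> std_forces X Y V 0"
| std_step: "x \<in> X \<Longrightarrow>
     (\<forall>g\<in>Y. \<exists>y. {f\<in>V. f x = y} \<noteq> {} \<and>
        (if y = g then std_forces X Y {f\<in>V. f x = y} m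
         else std_forces X Y {f\<in>V. f x = y} (m - 1)))
     \<Longrightarrow> std_forces X Y V m"

definition opt_std :: "'x set \<Rightarrow> 'y set \<Rightarrow> ('x \<Rightarrow> 'y) set \<Rightarrow> enat" where
  "opt_std X Y F = Sup {enat m | m. std_forces X Y F m}"

text \<open>Agnostic game with YES/NO feedback and at most eta lies.  The state records,
for every candidate target f, the number of rounds L f in which the feedback was
incorrect with respect to f, and the number of mistakes M f of the learner with
respect to f.  The adversary wins (at least m mistakes) once some f in F has at
most eta lies and at least m mistakes w.r.t. f.  Feedback b = True means YES
("your guess is correct").\<close>

inductive ag_forces :: "'x set \<Rightarrow> 'y set \<Rightarrow> ('x \<Rightarrow> 'y) set \<Rightarrow> nat \<Rightarrow>
    (('x \<Rightarrow> 'y) \<Rightarrow> nat) \<Rightarrow> (('x \<Rightarrow> 'y) \<Rightarrow> nat) \<Rightarrow> nat \<Rightarrow> bool"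
  for X :: "'x set" and Y :: "'y set" and F :: "('x \<Rightarrow> 'y) set" and eta :: nat where
  ag_base: "f \<in> F \<Longrightarrow> L f \<le> eta \<Longrightarrow> m \<le> M f \<Longrightarrow> ag_forces X Y F eta L M m"
| ag_step: "x \<in> X \<Longrightarrow>
     (\<forall>g\<in>Y. \<exists>b::bool.
        ag_forces X Y F eta
          (\<lambda>f. L f + (if (f x = g) = b then 0 else 1))
          (\<lambda>f. M f + (if f x = g then 0 else 1)) m)
     \<Longrightarrow> ag_forces X Y F eta L M m"

definition opt_ag :: "'x set \<Rightarrow> 'y set \<Rightarrow> ('x \<Rightarrow> 'y) set \<Rightarrow> nat \<Rightarrow> enat" where
  "opt_ag X Y F eta = Sup {enat m | m. ag_forces X Y F eta (\<lambda>_. 0) (\<lambda>_. 0) m}"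

end

theory Submission
  imports Defs
begin



definition Vn :: "nat \<Rightarrow> nat \<Rightarrow> (nat \<Rightarrow> int) set" where
  "Vn k n = PiE {..<n} (\<lambda>_. {0..<int k})"

definition dot :: "nat \<Rightarrow> nat \<Rightarrow> (nat \<Rightarrow> int) \<Rightarrow> (nat \<Rightarrow> int) \<Rightarrow> int" where
  "dot k n a v = (\<Sum>i<n. a i * v i) mod int k"

definition vadd :: "nat \<Rightarrow> nat \<Rightarrow> (nat \<Rightarrow> int) \<Rightarrow> (nat \<Rightarrow> int) \<Rightarrow> (nat \<Rightarrow> int)" where
  "vadd k n w d = restrict (\<lambda>i. (w i + d i) mod int k) {..<n}"

lemma finite_Vn: "finite (Vn k n)"
  unfolding Vn_def by (intro finite_PiE) auto

lemma card_Vn: "card (Vn k n) = k ^ n"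
  unfolding Vn_def by (subst card_PiE) auto

lemma dot_comm: "dot k n a v = dot k n v a"
  unfolding dot_def by (simp add: mult.commute)

lemma dot_range: "k > 0 \<Longrightarrow> 0 \<le> dot k n a v \<and> dot k n a v < int k"
  unfolding dot_def by simp

lemma dot_vadd_left: "dot k n (vadd k n w d) v = (dot k n w v + dot k n d v) mod int k"
proof -
  have "dot k n (vadd k n w d) v = (\<Sum>i<n. ((w i + d i) mod int k) * v i) mod int k"
    unfolding dot_def vadd_def by simp
  also have "\<dots> = (\<Sum>i<n. (((w i + d i) mod int k) * v i) mod int k) mod int k"
    by (simp add: mod_sum_eq)
  also have "\<dots> = (\<Sum>i<n. ((w i + d i) * v i) mod int k) mod int k"
    by (simp add: mod_mult_left_eq)
  also have "\<dots> = (\<Sum>i<n. (w i + d i) * v i) mod int k"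
    by (simp add: mod_sum_eq)
  also have "\<dots> = ((\<Sum>i<n. w i * v i) + (\<Sum>i<n. d i * v i)) mod int k"
    by (simp add: distrib_right sum.distrib)
  also have "\<dots> = (dot k n w v + dot k n d v) mod int k"
    unfolding dot_def by (simp add: mod_add_eq)
  finally show ?thesis .
qed

lemma dot_vadd_right: "dot k n v (vadd k n w d) = (dot k n v w + dot k n v d) mod int k"
  using dot_vadd_left[of k n w d v] by (simp add: dot_comm)

lemma vadd_Vn: "k > 0 \<Longrightarrow> vadd k n w d \<in> Vn k n"
  unfolding vadd_def Vn_def by auto

lemma vadd_inj: "inj_on (\<lambda>w. vadd k n w d) (Vn k n)"
proof (rule inj_onI)
  fix w w' assume w: "w \<in> Vn k n" and w': "w' \<in> Vn k n" and eq: "vadd k n w d = vadd k n w' d"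
  show "w = w'"
  proof
    fix i show "w i = w' i"
    proof (cases "i < n")
      case True
      have "(w i + d i) mod int k = (w' i + d i) mod int k"
        using fun_cong[OF eq, of i] True unfolding vadd_def by simp
      hence "((w i + d i) mod int k - d i) mod int k = ((w' i + d i) mod int k - d i) mod int k"
        by simp
      hence "w i mod int k = w' i mod int k"
        by (simp add: mod_diff_left_eq)
      moreover have "w i \<in> {0..<int k}" "w' i \<in> {0..<int k}"
        using PiE_mem[OF w[unfolded Vn_def]] PiE_mem[OF w'[unfolded Vn_def]] True by auto
      ultimately show ?thesis by (metis atLeastLessThan_iff mod_pos_pos_trivial)
    next
      case False thus ?thesis using w w' unfolding Vn_def by (metis PiE_arb lessThan_iff)
    qed
  qed
qed

lemma shift_card:
  fixes \<phi> :: "'w \<Rightarrow> int" and \<tau> :: "'w \<Rightarrow> 'w"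
  assumes pk: "prime k" and fin: "finite W" and tW: "\<tau> ` W \<subseteq> W" and inj: "inj_on \<tau> W"
    and sh: "\<And>w. w \<in> W \<Longrightarrow> \<phi> (\<tau> w) mod int k = (\<phi> w + c) mod int k"
    and c: "c mod int k \<noteq> 0" and y: "0 \<le> y" "y < int k"
  shows "k * card {w\<in>W. \<phi> w mod int k = y} \<le> card W"
proof -
  define C where "C j = {w\<in>W. \<phi> w mod int k = (y + int j * c) mod int k}" for j :: nat
  have C0: "C 0 = {w\<in>W. \<phi> w mod int k = y}" unfolding C_def using y by simp
  have pw: "\<And>j w. w \<in> W \<Longrightarrow> (\<tau>^^j) w \<in> W \<and> \<phi> ((\<tau>^^j) w) mod int k = (\<phi> w + int j * c) mod int k"
  proof -
    fix j w assume "w \<in> W" thus "(\<tau>^^j) w \<in> W \<and> \<phi> ((\<tau>^^j) w) mod int k = (\<phi> w + int j * c) mod int k"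
    proof (induction j)
      case 0 then show ?case by simp
    next
      case (Suc j)
      then have a: "(\<tau>^^j) w \<in> W" and b: "\<phi> ((\<tau>^^j) w) mod int k = (\<phi> w + int j * c) mod int k" by auto
      have "\<phi> ((\<tau>^^Suc j) w) mod int k = (\<phi> ((\<tau>^^j) w) + c) mod int k" using sh[OF a] by simp
      also have "\<dots> = (\<phi> ((\<tau>^^j) w) mod int k + c) mod int k" by (simp add: mod_add_left_eq)
      also have "\<dots> = ((\<phi> w + int j * c) mod int k + c) mod int k" using b by simp
      also have "\<dots> = (\<phi> w + int j * c + c) mod int k" by (rule mod_add_left_eq)
      also have "\<dots> = (\<phi> w + int (Suc j) * c) mod int k" by (simp add: algebra_simps)
      finally show ?case using a tW by auto
    qed
  qed
  have injj: "inj_on (\<tau>^^j) W" for j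
  proof (induction j)
    case 0 then show ?case by simp
  next
    case (Suc j)
    have "inj_on (\<tau> \<circ> (\<tau>^^j)) W"
      by (rule comp_inj_on[OF Suc]) (rule inj_on_subset[OF inj], use pw in auto)
    thus ?case by (simp only: funpow.simps)
  qed
  have le: "card (C 0) \<le> card (C j)" for j
  proof -
    have "(\<tau>^^j) ` C 0 \<subseteq> C j"
    proof
      fix u assume "u \<in> (\<tau>^^j) ` C 0"
      then obtain w where w: "w \<in> C 0" "u = (\<tau>^^j) w" by auto
      have "\<phi> u mod int k = (\<phi> w + int j * c) mod int k" using pw w unfolding C_def by auto
      also have "\<dots> = (\<phi> w mod int k + int j * c) mod int k" by (simp add: mod_add_left_eq)
      also have "\<dots> = (y + int j * c) mod int k" using w y unfolding C_def by simp
      finally show "u \<in> C j" using pw w unfolding C_def by auto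
    qed
    moreover have "card ((\<tau>^^j) ` C 0) = card (C 0)"
      by (rule card_image, rule inj_on_subset[OF injj]) (auto simp: C_def)
    moreover have "finite (C j)" using fin unfolding C_def by auto
    ultimately show ?thesis by (metis card_mono)
  qed
  have disj: "C i \<inter> C j = {}" if "i < k" "j < k" "i \<noteq> j" for i j
  proof (rule ccontr)
    assume "C i \<inter> C j \<noteq> {}"
    then have "(y + int i * c) mod int k = (y + int j * c) mod int k" unfolding C_def by auto
    then have "int k dvd (y + int i * c) - (y + int j * c)" by (simp add: mod_eq_dvd_iff)
    then have "int k dvd (int i - int j) * c" by (simp add: algebra_simps)
    moreover have pk': "prime (int k)" using pk by (simp add: prime_nat_int_transfer)
    ultimately have "int k dvd (int i - int j) \<or> int k dvd c" by (simp add: prime_dvd_mult_iff)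
    moreover have "\<not> int k dvd c" using c by (simp add: dvd_eq_mod_eq_0)
    moreover have "\<not> int k dvd (int i - int j)"
    proof
      assume "int k dvd (int i - int j)"
      then obtain q where q: "int i - int j = int k * q" by (auto elim: dvdE)
      have "q \<noteq> 0" using q that by auto
      hence q1: "1 \<le> \<bar>q\<bar>" by (cases "q > 0") auto
      have "int k * 1 \<le> int k * \<bar>q\<bar>" by (rule mult_left_mono[OF q1]) simp
      hence "\<bar>int k * q\<bar> \<ge> int k" by (simp add: abs_mult)
      thus False using q that by auto
    qed
    ultimately show False by blast
  qed
  have "k * card (C 0) = (\<Sum>j<k. card (C 0))" by simp
  also have "\<dots> \<le> (\<Sum>j<k. card (C j))" by (intro sum_mono le)
  also have "\<dots> = card (\<Union>j<k. C j)"
    by (rule card_UN_disjoint[symmetric]) (use fin disj in \<open>auto simp: C_def\<close>)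
  also have "\<dots> \<le> card W" by (rule card_mono[OF fin]) (auto simp: C_def)
  finally show ?thesis using C0 by simp
qed

definition vsub :: "nat \<Rightarrow> nat \<Rightarrow> (nat \<Rightarrow> int) \<Rightarrow> (nat \<Rightarrow> int) \<Rightarrow> (nat \<Rightarrow> int)" where
  "vsub k n b a = restrict (\<lambda>i. (b i - a i) mod int k) {..<n}"

lemma dot_vsub: "dot k n (vsub k n b a) v = (dot k n b v - dot k n a v) mod int k"
proof -
  have "dot k n (vsub k n b a) v = (\<Sum>i<n. ((b i - a i) mod int k) * v i) mod int k"
    unfolding dot_def vsub_def by simp
  also have "\<dots> = (\<Sum>i<n. (((b i - a i) mod int k) * v i) mod int k) mod int k"
    by (simp add: mod_sum_eq)
  also have "\<dots> = (\<Sum>i<n. ((b i - a i) * v i) mod int k) mod int k"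
    by (simp add: mod_mult_left_eq)
  also have "\<dots> = (\<Sum>i<n. (b i - a i) * v i) mod int k"
    by (simp add: mod_sum_eq)
  also have "\<dots> = ((\<Sum>i<n. b i * v i) - (\<Sum>i<n. a i * v i)) mod int k"
    by (simp add: left_diff_distrib sum_subtractf)
  also have "\<dots> = (dot k n b v - dot k n a v) mod int k"
    unfolding dot_def by (simp add: mod_diff_eq)
  finally show ?thesis .
qed

definition Sol :: "nat \<Rightarrow> nat \<Rightarrow> ((nat \<Rightarrow> int) \<times> int) list \<Rightarrow> (nat \<Rightarrow> int) set" where
  "Sol k n C = {a \<in> Vn k n. \<forall>(v,y)\<in>set C. dot k n a v = y}"

definition fa :: "nat \<Rightarrow> nat \<Rightarrow> (nat \<Rightarrow> nat \<Rightarrow> int) \<Rightarrow> (nat \<Rightarrow> int) \<Rightarrow> nat \<Rightarrow> nat" where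
  "fa k n dec a = (\<lambda>x. nat (dot k n a (dec x)))"

lemma finite_Sol: "finite (Sol k n C)"
  unfolding Sol_def using finite_Vn by auto

lemma Sol_Cons: "Sol k n ((v,y)#C) = {a \<in> Sol k n C. dot k n a v = y}"
  unfolding Sol_def by auto

lemma class_eq:
  assumes "k > 0"
  shows "{f \<in> fa k n dec ` Sol k n C. f x = y} = fa k n dec ` Sol k n ((dec x, int y) # C)"
proof -
  have "nat (dot k n a (dec x)) = y \<longleftrightarrow> dot k n a (dec x) = int y" for a
    using dot_range[OF assms, of n a "dec x"] by auto
  thus ?thesis unfolding Sol_Cons fa_def by auto
qed

lemma mod_ne0:
  fixes a b :: int
  assumes "0 \<le> a" "a < int k" "0 \<le> b" "b < int k" "a \<noteq> b"
  shows "(b - a) mod int k \<noteq> 0"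
proof
  assume "(b - a) mod int k = 0"
  then obtain q where q: "b - a = int k * q" by (auto simp: dvd_eq_mod_eq_0[symmetric] elim: dvdE)
  have "q \<noteq> 0" using q assms by auto
  hence q1: "1 \<le> \<bar>q\<bar>" by (cases "q > 0") auto
  have "int k * 1 \<le> int k * \<bar>q\<bar>" by (rule mult_left_mono[OF q1]) simp
  hence "\<bar>int k * q\<bar> \<ge> int k" by (simp add: abs_mult)
  thus False using q assms by auto
qed

lemma split_card:
  assumes pk: "prime k" and a: "a \<in> Sol k n C" and b: "b \<in> Sol k n C"
    and ne: "dot k n a v \<noteq> dot k n b v" and y: "0 \<le> y" "y < int k"
  shows "k * card (Sol k n ((v, y) # C)) \<le> card (Sol k n C)"
proof -
  have k0: "k > 0" using pk prime_gt_0_nat by blast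
  define d where "d = vsub k n b a"
  have rng: "\<And>u w. 0 \<le> dot k n u w \<and> dot k n u w < int k" using dot_range[OF k0] by blast
  have "k * card {w \<in> Sol k n C. dot k n w v mod int k = y} \<le> card (Sol k n C)"
  proof (rule shift_card[OF pk finite_Sol, where \<tau> = "\<lambda>w. vadd k n w d" and c = "dot k n b v - dot k n a v"])
    show "(\<lambda>w. vadd k n w d) ` Sol k n C \<subseteq> Sol k n C"
    proof safe
      fix w assume w: "w \<in> Sol k n C"
      show "vadd k n w d \<in> Sol k n C" unfolding Sol_def
      proof (safe)
        show "vadd k n w d \<in> Vn k n" using vadd_Vn[OF k0] .
        fix u z assume uz: "(u, z) \<in> set C"
        have "dot k n w u = z" "dot k n a u = z" "dot k n b u = z" using uz w a b unfolding Sol_def by auto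
        moreover have "0 \<le> z" "z < int k" using rng[of a u] \<open>dot k n a u = z\<close> by auto
        ultimately show "dot k n (vadd k n w d) u = z"
          unfolding dot_vadd_left d_def dot_vsub by simp
      qed
    qed
    show "inj_on (\<lambda>w. vadd k n w d) (Sol k n C)"
      by (rule inj_on_subset[OF vadd_inj]) (auto simp: Sol_def)
    fix w assume "w \<in> Sol k n C"
    show "dot k n (vadd k n w d) v mod int k = (dot k n w v + (dot k n b v - dot k n a v)) mod int k"
      unfolding dot_vadd_left d_def dot_vsub by (simp add: mod_add_right_eq)
  next
    show "(dot k n b v - dot k n a v) mod int k \<noteq> 0"
      by (rule mod_ne0) (use rng ne in auto)
  qed (use y in auto)
  moreover have "{w \<in> Sol k n C. dot k n w v mod int k = y} = Sol k n ((v, y) # C)"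
    unfolding Sol_Cons by (simp add: dot_def)
  ultimately show ?thesis by simp
qed




lemma std_bound:
  assumes pk: "prime k" and sf: "std_forces X {..<k} V m"
  shows "V = fa k n dec ` Sol k n C \<Longrightarrow> k ^ m \<le> card (Sol k n C)"
  using sf
proof (induction V m arbitrary: C rule: std_forces.induct)
  case (std_base V)
  then have "Sol k n C \<noteq> {}" by auto
  then show ?case using finite_Sol[of k n C] by (simp add: Suc_le_eq card_gt_0_iff)
next
  case (std_step x V m)
  have k0: "k > 0" using pk prime_gt_0_nat by blast
  let ?v = "dec x"
  let ?C = "\<lambda>y::nat. (?v, int y) # C"
  have cls: "{f \<in> V. f x = y} = fa k n dec ` Sol k n (?C y)" for y
    using class_eq[OF k0] std_step.prems by blast
  have sub: "Sol k n (?C y) \<subseteq> Sol k n C" for y unfolding Sol_Cons by auto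
  have mono: "card (Sol k n (?C y)) \<le> card (Sol k n C)" for y
    by (rule card_mono[OF finite_Sol sub])
  have pick: "\<exists>y. {f \<in> V. f x = y} \<noteq> {} \<and> k ^ (if y = g then m else m - 1) \<le> card (Sol k n (?C y))"
    if gk: "g < k" for g
  proof -
    from std_step.IH gk obtain y where y1: "{f \<in> V. f x = y} \<noteq> {}"
      and I: "if y = g
        then std_forces X {..<k} {f \<in> V. f x = y} m \<and>
             (\<forall>xa. {f \<in> V. f x = y} = fa k n dec ` Sol k n xa \<longrightarrow>
                   k ^ m \<le> card (Sol k n xa))
        else std_forces X {..<k} {f \<in> V. f x = y} (m - 1) \<and>
             (\<forall>xa. {f \<in> V. f x = y} = fa k n dec ` Sol k n xa \<longrightarrow>
                   k ^ (m - 1) \<le> card (Sol k n xa))" by blast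
    have "k ^ (if y = g then m else m - 1) \<le> card (Sol k n (?C y))"
    proof (cases "y = g")
      case True thus ?thesis using I cls[of y] by simp
    next
      case False thus ?thesis using I cls[of y] by simp
    qed
    thus ?thesis using y1 by blast
  qed
  show ?case
  proof (cases "\<exists>a\<in>Sol k n C. \<exists>b\<in>Sol k n C. dot k n a ?v \<noteq> dot k n b ?v")
    case True
    then obtain a b where ab: "a \<in> Sol k n C" "b \<in> Sol k n C" "dot k n a ?v \<noteq> dot k n b ?v" by blast
    obtain y where y: "{f \<in> V. f x = y} \<noteq> {}"
      and H: "k ^ (if y = 0 then m else m - 1) \<le> card (Sol k n (?C y))"
      using pick[OF k0] by blast
    have ne: "Sol k n (?C y) \<noteq> {}" using y cls by auto
    then obtain a' where a': "a' \<in> Sol k n (?C y)" by blast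
    have yk: "int y < int k" using a' dot_range[OF k0, of n a' ?v] unfolding Sol_Cons by auto
    show ?thesis
    proof (cases "y = 0")
      case True thus ?thesis using H mono[of y] by simp
    next
      case False
      have spl: "k * card (Sol k n (?C y)) \<le> card (Sol k n C)"
        by (rule split_card[OF pk ab]) (use yk in auto)
      show ?thesis
      proof (cases m)
        case 0
        have "card (Sol k n (?C y)) > 0" using ne finite_Sol by (simp add: card_gt_0_iff)
        thus ?thesis using 0 mono[of y] by simp
      next
        case (Suc m')
        have "k ^ m = k * k ^ (m - 1)" using Suc by simp
        also have "\<dots> \<le> k * card (Sol k n (?C y))" using H False by simp
        finally show ?thesis using spl by simp
      qed
    qed
  next
    case False
    have "\<exists>y. {f \<in> V. f x = y} \<noteq> {}" using pick[OF k0] by blast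
    then obtain a0 where a0: "a0 \<in> Sol k n C" using std_step.prems by auto
    define g where "g = nat (dot k n a0 ?v)"
    have gk: "g < k" using dot_range[OF k0, of n a0 ?v] unfolding g_def by auto
    obtain y where y: "{f \<in> V. f x = y} \<noteq> {}"
      and H: "k ^ (if y = g then m else m - 1) \<le> card (Sol k n (?C y))"
      using pick[OF gk] by blast
    have ne: "Sol k n (?C y) \<noteq> {}" using y cls by auto
    then obtain a' where a': "a' \<in> Sol k n (?C y)" by blast
    have "dot k n a' ?v = dot k n a0 ?v" using False a' a0 sub by blast
    hence "y = g" using a' unfolding Sol_Cons g_def by auto
    thus ?thesis using H mono[of y] by simp
  qed
qed

lemma opt_std_le:
  assumes pk: "prime k" and F: "F = fa k n dec ` Vn k n"
  shows "opt_std X {..<k} F \<le> enat n"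
  unfolding opt_std_def
proof (rule Sup_least, safe)
  fix m assume "std_forces X {..<k} F m"
  moreover have "F = fa k n dec ` Sol k n []" using F by (simp add: Sol_def)
  ultimately have "k ^ m \<le> card (Sol k n [])" using std_bound[OF pk] by blast
  also have "\<dots> = k ^ n" by (simp add: Sol_def card_Vn)
  finally have "m \<le> n" using pk prime_gt_1_nat power_le_imp_le_exp by blast
  thus "enat m \<le> enat n" by simp
qed




lemma delta_sum:
  assumes k0: "k > 0" and r: "0 \<le> z" "z < int k"
  shows "(\<Sum>g<k. (if z = int g then (1::nat) else 0)) = 1"
proof -
  have "(\<Sum>g<k. (if z = int g then (1::nat) else 0)) = (\<Sum>g<k. (if g = nat z then 1 else 0))"
    by (rule sum.cong) (use r in auto)
  also have "\<dots> = 1" using r by (simp add: sum.delta)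
  finally show ?thesis .
qed

lemma card_ind: "finite A \<Longrightarrow> card {a\<in>A. P a} = (\<Sum>a\<in>A. if P a then (1::nat) else 0)"
  by (simp add: sum.inter_filter[symmetric])

lemma sq_sum_eq:
  assumes k0: "k > 0" and fin: "finite S"
  shows "(\<Sum>g<k. (card {a\<in>S. dot k n a v = int g})^2)
       = (\<Sum>a\<in>S. \<Sum>b\<in>S. if dot k n a v = dot k n b v then (1::nat) else 0)"
proof -
  have "(\<Sum>g<k. (card {a\<in>S. dot k n a v = int g})^2)
      = (\<Sum>g<k. \<Sum>a\<in>S. \<Sum>b\<in>S. (if dot k n a v = int g then 1 else 0) * (if dot k n b v = int g then 1 else 0))"
    by (simp add: card_ind[OF fin] power2_eq_square sum_product)
  also have "\<dots> = (\<Sum>a\<in>S. \<Sum>b\<in>S. \<Sum>g<k. (if dot k n a v = int g then 1 else 0) * (if dot k n b v = int g then 1 else 0))"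
    by (simp add: sum.swap[of _ "{..<k}"])
  also have "\<dots> = (\<Sum>a\<in>S. \<Sum>b\<in>S. if dot k n a v = dot k n b v then (1::nat) else 0)"
  proof (intro sum.cong refl)
    fix a b
    show "(\<Sum>g<k. (if dot k n a v = int g then 1 else 0) * (if dot k n b v = int g then 1 else 0))
        = (if dot k n a v = dot k n b v then (1::nat) else 0)"
    proof (cases "dot k n a v = dot k n b v")
      case True
      have "(\<Sum>g<k. (if dot k n a v = int g then 1 else 0) * (if dot k n b v = int g then 1 else 0))
          = (\<Sum>g<k. if dot k n a v = int g then (1::nat) else 0)"
        by (rule sum.cong) (auto simp: True)
      thus ?thesis using delta_sum[OF k0, of "dot k n a v"] dot_range[OF k0, of n a v] True by simp
    next
      case False
      have "(\<Sum>g<k. (if dot k n a v = int g then 1 else 0) * (if dot k n b v = int g then 1 else 0)) = (0::nat)"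
        by (rule sum.neutral) (use False in auto)
      thus ?thesis using False by simp
    qed
  qed
  finally show ?thesis .
qed

lemma sum_card_eq:
  assumes k0: "k > 0" and fin: "finite S"
  shows "(\<Sum>g<k. card {a\<in>S. dot k n a v = int g}) = card S"
proof -
  have "(\<Sum>g<k. card {a\<in>S. dot k n a v = int g}) = (\<Sum>g<k. \<Sum>a\<in>S. if dot k n a v = int g then (1::nat) else 0)"
    by (simp add: card_ind[OF fin])
  also have "\<dots> = (\<Sum>a\<in>S. \<Sum>g<k. if dot k n a v = int g then (1::nat) else 0)"
    by (rule sum.swap)
  also have "\<dots> = (\<Sum>a\<in>S. 1)"
    by (intro sum.cong refl delta_sum[OF k0]) (use dot_range[OF k0] in auto)
  finally show ?thesis by simp
qed

definition ev :: "nat \<Rightarrow> nat \<Rightarrow> nat \<Rightarrow> (nat \<Rightarrow> int)" where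
  "ev k n i = restrict (\<lambda>j. if j = i then 1 else 0) {..<n}"

lemma dot_ev: "i < n \<Longrightarrow> dot k n a (ev k n i) = a i mod int k"
proof -
  assume i: "i < n"
  have "(\<Sum>j<n. a j * ev k n i j) = (\<Sum>j<n. if j = i then a i else 0)"
    by (rule sum.cong) (auto simp: ev_def)
  also have "\<dots> = a i" using i by simp
  finally show ?thesis unfolding dot_def by simp
qed

lemma pair_card:
  assumes pk: "prime k" and a: "a \<in> Vn k n" and b: "b \<in> Vn k n" and ab: "a \<noteq> b"
  shows "k * card {v \<in> Vn k n. dot k n a v = dot k n b v} \<le> k ^ n"
proof -
  have k0: "k > 0" using pk prime_gt_0_nat by blast
  obtain i where i: "a i \<noteq> b i" using ab by blast
  have "i < n"
  proof (rule ccontr)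
    assume "\<not> i < n" thus False using i a b unfolding Vn_def by (metis PiE_arb lessThan_iff)
  qed
  note iln = this
  have ai: "0 \<le> a i" "a i < int k" "0 \<le> b i" "b i < int k"
    using PiE_mem[OF a[unfolded Vn_def], of i] PiE_mem[OF b[unfolded Vn_def], of i] iln by auto
  have rng: "\<And>u w. 0 \<le> dot k n u w \<and> dot k n u w < int k" using dot_range[OF k0] by blast
  have "k * card {v \<in> Vn k n. (dot k n a v - dot k n b v) mod int k = 0} \<le> card (Vn k n)"
  proof (rule shift_card[OF pk finite_Vn, where \<tau> = "\<lambda>v. vadd k n v (ev k n i)" and c = "a i - b i"])
    show "(\<lambda>v. vadd k n v (ev k n i)) ` Vn k n \<subseteq> Vn k n" using vadd_Vn[OF k0] by auto
    show "inj_on (\<lambda>v. vadd k n v (ev k n i)) (Vn k n)" by (rule vadd_inj)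
    fix w
    show "(dot k n a (vadd k n w (ev k n i)) - dot k n b (vadd k n w (ev k n i))) mod int k =
          (dot k n a w - dot k n b w + (a i - b i)) mod int k"
    proof -
      have e1: "a i mod int k = a i" "b i mod int k = b i" using ai by auto
      have "(dot k n a (vadd k n w (ev k n i)) - dot k n b (vadd k n w (ev k n i))) mod int k
          = ((dot k n a w + a i) mod int k - (dot k n b w + b i) mod int k) mod int k"
        unfolding dot_vadd_right dot_ev[OF iln] e1 by simp
      also have "\<dots> = ((dot k n a w + a i) - (dot k n b w + b i)) mod int k"
        by (rule mod_diff_eq)
      also have "(dot k n a w + a i) - (dot k n b w + b i) = dot k n a w - dot k n b w + (a i - b i)"
        by simp
      finally show ?thesis .
    qed
  next
    show "(a i - b i) mod int k \<noteq> 0" by (rule mod_ne0) (use ai i in auto)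
  qed (use k0 in auto)
  moreover have "{v \<in> Vn k n. (dot k n a v - dot k n b v) mod int k = 0} = {v \<in> Vn k n. dot k n a v = dot k n b v}"
  proof -
    have "(dot k n a v - dot k n b v) mod int k = 0 \<longleftrightarrow> dot k n a v = dot k n b v" for v
    proof
      assume h: "(dot k n a v - dot k n b v) mod int k = 0"
      show "dot k n a v = dot k n b v"
      proof (rule ccontr)
        assume "dot k n a v \<noteq> dot k n b v"
        hence "dot k n b v \<noteq> dot k n a v" by simp
        from mod_ne0[of "dot k n b v" k "dot k n a v", OF _ _ _ _ this] rng[of a v] rng[of b v] h
        show False by blast
      qed
    qed simp
    thus ?thesis by auto
  qed
  ultimately show ?thesis by (simp add: card_Vn)
qed

lemma dev_bound:
  fixes t :: "nat \<Rightarrow> real"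
  assumes k0: "k > 0" and s1: "(\<Sum>g<k. t g) = s" and s2: "(\<Sum>g<k. (t g)^2) \<le> s + s^2 / k"
    and g: "g < k" and s0: "0 \<le> s"
  shows "t g \<le> s / k + sqrt s"
proof -
  have "(\<Sum>h<k. (t h - s / k)^2) = (\<Sum>h<k. (t h)^2) - 2 * (s / k) * (\<Sum>h<k. t h) + real k * (s / k)^2"
    by (simp add: power2_diff sum.distrib sum_subtractf sum_distrib_left sum_divide_distrib algebra_simps)
  also have "\<dots> = (\<Sum>h<k. (t h)^2) - s^2 / k"
    using k0 s1 by (simp add: power2_eq_square field_simps)
  also have "\<dots> \<le> s" using s2 by simp
  finally have tot: "(\<Sum>h<k. (t h - s / k)^2) \<le> s" .
  have "(t g - s / k)^2 \<le> (\<Sum>h<k. (t h - s / k)^2)"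
    by (rule member_le_sum) (use g in auto)
  hence "(t g - s / k)^2 \<le> s" using tot by linarith
  hence "sqrt ((t g - s / k)^2) \<le> sqrt s" by (rule real_sqrt_le_mono)
  hence "\<bar>t g - s / k\<bar> \<le> sqrt s" by simp
  thus ?thesis by linarith
qed

lemma exists_good:
  assumes pk: "prime k" and S: "S \<subseteq> Vn k n"
  shows "\<exists>v\<in>Vn k n. \<forall>g<k. real (card {a\<in>S. dot k n a v = int g}) \<le> real (card S) / k + sqrt (real (card S))"
proof -
  have k0: "k > 0" using pk prime_gt_0_nat by blast
  have finS: "finite S" using S finite_Vn finite_subset by blast
  define Q where "Q v = (\<Sum>g<k. (card {a\<in>S. dot k n a v = int g})^2)" for v
  define s where "s = real (card S)"
  define K where "K = real k ^ n"
  have sumQ: "(\<Sum>v\<in>Vn k n. Q v) = (\<Sum>a\<in>S. \<Sum>b\<in>S. card {v\<in>Vn k n. dot k n a v = dot k n b v})"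
  proof -
    have "(\<Sum>v\<in>Vn k n. Q v) = (\<Sum>v\<in>Vn k n. \<Sum>a\<in>S. \<Sum>b\<in>S. if dot k n a v = dot k n b v then (1::nat) else 0)"
      unfolding Q_def by (simp add: sq_sum_eq[OF k0 finS])
    also have "\<dots> = (\<Sum>a\<in>S. \<Sum>v\<in>Vn k n. \<Sum>b\<in>S. if dot k n a v = dot k n b v then (1::nat) else 0)"
      by (rule sum.swap)
    also have "\<dots> = (\<Sum>a\<in>S. \<Sum>b\<in>S. \<Sum>v\<in>Vn k n. if dot k n a v = dot k n b v then (1::nat) else 0)"
      by (simp add: sum.swap[of _ "Vn k n"])
    also have "\<dots> = (\<Sum>a\<in>S. \<Sum>b\<in>S. card {v\<in>Vn k n. dot k n a v = dot k n b v})"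
      by (simp add: card_ind[OF finite_Vn])
    finally show ?thesis .
  qed
  have pb: "real (card {v\<in>Vn k n. dot k n a v = dot k n b v}) \<le> (if a = b then K else 0) + K / k"
    if a: "a \<in> S" and b: "b \<in> S" for a b
  proof (cases "a = b")
    case True
    have "card {v\<in>Vn k n. dot k n a v = dot k n b v} \<le> card (Vn k n)"
      by (rule card_mono[OF finite_Vn]) auto
    hence "real (card {v\<in>Vn k n. dot k n a v = dot k n b v}) \<le> K"
      unfolding K_def card_Vn by (metis of_nat_le_iff of_nat_power)
    moreover have "0 \<le> K / k" by (simp add: K_def)
    ultimately have "real (card {v\<in>Vn k n. dot k n a v = dot k n b v}) \<le> K + K / k" by linarith
    thus ?thesis using True by (simp only: if_True simp_thms)
  next
    case False
    have "k * card {v\<in>Vn k n. dot k n a v = dot k n b v} \<le> k ^ n"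
      using pair_card[OF pk _ _ False] a b S by blast
    hence "real k * real (card {v\<in>Vn k n. dot k n a v = dot k n b v}) \<le> K"
      unfolding K_def by (metis of_nat_le_iff of_nat_mult of_nat_power)
    hence "real (card {v\<in>Vn k n. dot k n a v = dot k n b v}) \<le> K / k"
      using k0 by (simp add: field_simps)
    thus ?thesis using False by simp
  qed
  have "real (\<Sum>v\<in>Vn k n. Q v) \<le> (\<Sum>a\<in>S. \<Sum>b\<in>S. (if a = b then K else 0) + K / k)"
    unfolding sumQ of_nat_sum by (intro sum_mono pb)
  also have "\<dots> = (\<Sum>a\<in>S. K + s * (K / k))"
    by (intro sum.cong refl) (simp add: sum.distrib finS s_def)
  also have "\<dots> = K * (s + s^2 / k)"
    by (simp add: s_def power2_eq_square algebra_simps)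
  finally have tot: "real (\<Sum>v\<in>Vn k n. Q v) \<le> K * (s + s^2 / k)" .
  obtain v where v: "v \<in> Vn k n" "real (Q v) \<le> s + s^2 / k"
  proof (rule ccontr)
    assume "\<not> thesis"
    with that have lt: "\<forall>v\<in>Vn k n. s + s^2 / k < real (Q v)" by force
    have ne: "Vn k n \<noteq> {}" using card_Vn[of k n] k0 by (metis card.empty power_not_zero not_less0 neq0_conv)
    have "(\<Sum>v\<in>Vn k n. s + s^2 / k) < (\<Sum>v\<in>Vn k n. real (Q v))"
      by (rule sum_strict_mono[OF finite_Vn ne]) (use lt in auto)
    hence "K * (s + s^2 / k) < real (\<Sum>v\<in>Vn k n. Q v)"
      by (simp add: card_Vn K_def)
    thus False using tot by simp
  qed
  have "\<forall>g<k. real (card {a\<in>S. dot k n a v = int g}) \<le> s / k + sqrt s"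
  proof (intro allI impI)
    fix g assume g: "g < k"
    show "real (card {a\<in>S. dot k n a v = int g}) \<le> s / k + sqrt s"
    proof (rule dev_bound[OF k0 _ _ g])
      show "(\<Sum>g<k. real (card {a\<in>S. dot k n a v = int g})) = s"
        unfolding s_def of_nat_sum[symmetric] by (simp add: sum_card_eq[OF k0 finS])
      show "(\<Sum>g<k. (real (card {a\<in>S. dot k n a v = int g}))^2) \<le> s + s^2 / k"
        using v(2) unfolding Q_def by simp
    qed (simp add: s_def)
  qed
  thus ?thesis using v(1) s_def by blast
qed




lemma lies:
  fixes k :: nat
  assumes x0: "x0 \<in> X" and reps: "\<forall>c<k. rep c \<in> F \<and> rep c x0 = c"
  shows "(\<forall>f. s \<le> M f + L f) \<Longrightarrow> r + 1 \<le> (\<Sum>c<k. eta + 1 - L (rep c))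
    \<Longrightarrow> ag_forces X {..<k} F eta L M (s + r - eta)"
proof (induction r arbitrary: L M s)
  case 0
  have "\<exists>c<k. 0 < eta + 1 - L (rep c)"
  proof (rule ccontr)
    assume "\<not> (\<exists>c<k. 0 < eta + 1 - L (rep c))"
    hence "\<forall>c<k. eta + 1 - L (rep c) = 0" by auto
    hence "(\<Sum>c<k. eta + 1 - L (rep c)) = 0" by simp
    thus False using 0(2) by simp
  qed
  then obtain c where c: "c < k" "0 < eta + 1 - L (rep c)" by blast
  have Lc: "L (rep c) \<le> eta" using c by simp
  have h: "s \<le> M (rep c) + L (rep c)" by (rule 0(1)[rule_format])
  have Mc: "s + 0 - eta \<le> M (rep c)" using h Lc by linarith
  have rc: "rep c \<in> F" using reps[rule_format, OF c(1)] by (rule conjunct1)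
  show ?case by (rule ag_base[where f="rep c" and L=L and M=M and m="s + 0 - eta", OF rc Lc Mc])
next
  case (Suc r)
  show ?case
  proof (rule ag_step[OF x0], intro ballI exI[of _ False])
    fix g assume g: "g \<in> {..<k}"
    define L' where "L' = (\<lambda>f. L f + (if (f x0 = g) = False then 0 else 1))"
    define M' where "M' = (\<lambda>f. M f + (if f x0 = g then 0 else 1))"
    have L'rep: "L' (rep c) = L (rep c) + (if c = g then 1 else 0)" if "c < k" for c
      using reps that unfolding L'_def by auto
    have A: "\<forall>f. s + 1 \<le> M' f + L' f" using Suc.prems(1) unfolding L'_def M'_def by auto
    have "(\<Sum>c<k. eta + 1 - L (rep c)) \<le> (\<Sum>c<k. (eta + 1 - L' (rep c)) + (if c = g then 1 else 0))"
      by (intro sum_mono) (simp add: L'rep)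
    also have "\<dots> = (\<Sum>c<k. eta + 1 - L' (rep c)) + 1"
    proof -
      have "(\<Sum>c<k. if c = g then (1::nat) else 0) = 1" using g by (subst sum.delta) auto
      thus ?thesis by (simp add: sum.distrib)
    qed
    finally have B: "r + 1 \<le> (\<Sum>c<k. eta + 1 - L' (rep c))" using Suc.prems(2) by simp
    have "ag_forces X {..<k} F eta L' M' (s + 1 + r - eta)" by (rule Suc.IH[OF A B])
    thus "ag_forces X {..<k} F eta (\<lambda>f. L f + (if (f x0 = g) = False then 0 else 1))
          (\<lambda>f. M f + (if f x0 = g then 0 else 1)) (s + Suc r - eta)"
      unfolding L'_def M'_def by simp
  qed
qed

lemma bandit:
  fixes q :: real
  assumes pk: "prime k" and k2: "k \<ge> 2" and F: "F = fa k n dec ` Vn k n"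
    and surj: "\<forall>v\<in>Vn k n. \<exists>x\<in>X. dec x = v"
    and q: "q = 1 - 1 / k - 1 / k^2"
  shows "S \<subseteq> Vn k n \<Longrightarrow> (\<forall>a\<in>S. L (fa k n dec a) \<le> eta \<and> t \<le> M (fa k n dec a))
    \<Longrightarrow> real (card S) * q ^ r \<ge> (real k ^ 2)^2 \<Longrightarrow> ag_forces X {..<k} F eta L M (t + r)"
proof (induction r arbitrary: S L M t)
  case 0
  have "1 \<le> (real k ^ 2)^2" using k2 by simp
  moreover have "(real k ^ 2)^2 \<le> real (card S)" using 0(3) by simp
  ultimately have "real (card S) \<ge> 1" by linarith
  hence "S \<noteq> {}" by auto
  then obtain a where a: "a \<in> S" by blast
  have rc: "fa k n dec a \<in> F" using a 0(1) F by blast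
  have Lc: "L (fa k n dec a) \<le> eta" "t + 0 \<le> M (fa k n dec a)" using a 0(2) by auto
  show ?case by (rule ag_base[where f="fa k n dec a" and L=L and M=M and m="t + 0", OF rc Lc])
next
  case (Suc r)
  have k0: "k > 0" using k2 by simp
  have rk: "real k \<ge> 2" using k2 by simp
  have q0: "0 < q" "q \<le> 1"
  proof -
    have kk: "2 * 2 \<le> real k * real k" by (rule mult_mono[OF rk rk]) auto
    have "1 / real k \<le> 1/2" using rk by (intro divide_left_mono) auto
    moreover have "1 / (real k)^2 \<le> 1/4" using kk by (intro divide_left_mono) (auto simp: power2_eq_square)
    ultimately have "1 / real k \<le> 1/2" "1 / (real k)^2 \<le> 1/4" by auto
    thus "0 < q" using q by linarith
    have "0 \<le> 1/real k" "0 \<le> 1/(real k)^2" by auto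
    thus "q \<le> 1" using q by linarith
  qed
  define s where "s = real (card S)"
  have finS: "finite S" using Suc.prems(1) finite_Vn finite_subset by blast
  have "q ^ Suc r \<le> 1" using q0 by (intro power_le_one) auto
  hence "s * q ^ Suc r \<le> s" unfolding s_def by (intro mult_left_le) auto
  moreover have "(real k ^ 2)^2 \<le> s * q ^ Suc r" using Suc.prems(3) s_def by simp
  ultimately have sk4: "s \<ge> (real k ^ 2)^2" by linarith
  obtain v where v: "v \<in> Vn k n"
    and good: "\<forall>g<k. real (card {a\<in>S. dot k n a v = int g}) \<le> s / k + sqrt s"
    using exists_good[OF pk Suc.prems(1)] unfolding s_def by blast
  obtain x where x: "x \<in> X" "dec x = v" using surj v by blast
  have sq: "sqrt s \<le> s / real k ^ 2"
  proof -
    have s0: "0 \<le> s" by (simp add: s_def)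
    have a1: "sqrt ((real k ^ 2)^2) \<le> sqrt s" using sk4 by (rule real_sqrt_le_mono)
    have a2: "sqrt ((real k ^ 2)^2) = real k ^ 2" by (metis real_sqrt_abs abs_of_nonneg zero_le_power2)
    have k2s: "real k ^ 2 \<le> sqrt s" using a1 a2 by linarith
    have "real k ^ 2 * sqrt s \<le> sqrt s * sqrt s" by (rule mult_right_mono[OF k2s]) (use s0 in simp)
    also have "sqrt s * sqrt s = s" using s0 by simp
    finally have "sqrt s * real k ^ 2 \<le> s" by (simp add: mult.commute)
    thus ?thesis using k0 by (subst pos_le_divide_eq) auto
  qed
  show ?case
  proof (rule ag_step[OF x(1)], intro ballI exI[of _ False])
    fix g assume g: "g \<in> {..<k}"
    define L' where "L' = (\<lambda>f. L f + (if (f x = g) = False then 0 else 1))"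
    define M' where "M' = (\<lambda>f. M f + (if f x = g then 0 else 1))"
    define S' where "S' = {a\<in>S. dot k n a v \<noteq> int g}"
    define T where "T = {a\<in>S. dot k n a v = int g}"
    have fx: "fa k n dec a x = g \<longleftrightarrow> dot k n a v = int g" for a
      using dot_range[OF k0, of n a v] x(2) unfolding fa_def by auto
    have A1: "S' \<subseteq> Vn k n" using Suc.prems(1) unfolding S'_def by auto
    have A2: "\<forall>a\<in>S'. L' (fa k n dec a) \<le> eta \<and> t + 1 \<le> M' (fa k n dec a)"
      using Suc.prems(2) fx unfolding S'_def L'_def M'_def by auto
    have cS: "card S = card S' + card T"
    proof -
      have "S = S' \<union> T" unfolding S'_def T_def by auto
      moreover have "card (S' \<union> T) = card S' + card T"
        by (rule card_Un_disjoint) (use finS in \<open>auto simp: S'_def T_def\<close>)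
      ultimately show ?thesis by simp
    qed
    have "real (card T) \<le> s / k + sqrt s" using good g unfolding T_def by auto
    moreover have "s = real (card S') + real (card T)" using cS unfolding s_def by simp
    ultimately have "real (card S') \<ge> s - s / k - s / real k ^ 2" using sq by linarith
    also have "s - s / k - s / real k ^ 2 = s * q" unfolding q by (simp add: right_diff_distrib)
    finally have c': "real (card S') \<ge> s * q" .
    have "(real k ^ 2)^2 \<le> s * q ^ Suc r" using Suc.prems(3) s_def by simp
    also have "\<dots> = (s * q) * q ^ r" by simp
    also have "\<dots> \<le> real (card S') * q ^ r" by (rule mult_right_mono[OF c']) (use q0 in simp)
    finally have A3: "(real k ^ 2)^2 \<le> real (card S') * q ^ r" .
    have "ag_forces X {..<k} F eta L' M' (t + 1 + r)" by (rule Suc.IH[OF A1 A2 A3])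
    thus "ag_forces X {..<k} F eta (\<lambda>f. L f + (if (f x = g) = False then 0 else 1))
          (\<lambda>f. M f + (if f x = g then 0 else 1)) (t + Suc r)"
      unfolding L'_def M'_def by simp
  qed
qed




lemma ln_ge1: "5 \<le> k \<Longrightarrow> 1 \<le> ln (real k)"
proof -
  assume k: "5 \<le> k"
  have "exp 1 \<le> real k" using exp_le k by linarith
  hence "ln (exp 1) \<le> ln (real k)" using k by (subst ln_le_cancel_iff) auto
  thus ?thesis by simp
qed

lemma pow_bound:
  fixes q :: real
  assumes k5: "5 \<le> k" and q: "q = 1 - 1 / real k - 1 / (real k)^2"
    and R: "R = nat \<lfloor>real k * (real k - 2) * ln (real k)\<rfloor>"
  shows "1 \<le> real k ^ k * q ^ R"
proof -
  define K where "K = real k"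
  have K5: "K \<ge> 5" using k5 K_def by simp
  have "5 * K \<le> K * K" by (rule mult_right_mono) (use K5 in auto)
  hence D: "K^2 - K - 1 > 0" using K5 unfolding power2_eq_square by linarith
  have qe: "q = (K^2 - K - 1) / K^2" unfolding q K_def using K5 K_def
    by (simp add: field_simps power2_eq_square)
  have q0: "q > 0" unfolding qe using D K5 by simp
  have q1: "q \<le> 1" unfolding qe using K5 by (simp add: field_simps)
  have "ln (1 / q) \<le> 1 / q - 1" by (rule ln_le_minus_one) (use q0 in simp)
  moreover have "ln (1 / q) = - ln q" using q0 by (simp add: ln_div)
  moreover have "1 / q - 1 = (K + 1) / (K^2 - K - 1)"
    unfolding qe using D K5 by (simp add: field_simps)
  ultimately have lnq: "- ln q \<le> (K + 1) / (K^2 - K - 1)" by simp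
  have lnq0: "0 \<le> - ln q" using q0 q1 by simp
  have lK: "ln K \<ge> 1" using ln_ge1[OF k5] K_def by simp
  define Xr where "Xr = K * (K - 2) * ln K"
  have X0: "0 \<le> Xr" unfolding Xr_def using K5 lK by simp
  have RX: "real R \<le> Xr" unfolding R Xr_def K_def using X0[unfolded Xr_def K_def]
    by (simp add: of_nat_nat)
  have "real R * (- ln q) \<le> Xr * (- ln q)" by (rule mult_right_mono[OF RX lnq0])
  also have "\<dots> \<le> Xr * ((K + 1) / (K^2 - K - 1))" by (rule mult_left_mono[OF lnq X0])
  also have "\<dots> = K * ln K * ((K - 2) * (K + 1) / (K^2 - K - 1))"
    unfolding Xr_def by (simp add: field_simps)
  also have "\<dots> \<le> K * ln K * 1"
  proof (rule mult_left_mono)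
    show "(K - 2) * (K + 1) / (K^2 - K - 1) \<le> 1" using D
      by (simp add: divide_le_eq power2_eq_square algebra_simps)
    show "0 \<le> K * ln K" using K5 lK by simp
  qed
  finally have main: "real R * (- ln q) \<le> K * ln K" by simp
  have pos: "0 < K ^ k * q ^ R" using K5 q0 by simp
  have "ln (K ^ k * q ^ R) = real k * ln K + real R * ln q"
    using K5 q0 by (simp add: ln_mult ln_realpow)
  also have "\<dots> \<ge> 0" using main K_def by simp
  finally have "0 \<le> ln (K ^ k * q ^ R)" .
  hence "1 \<le> K ^ k * q ^ R" using pos by (simp add: ln_ge_zero_iff)
  thus ?thesis using K_def by simp
qed

lemma half_max: "(a::real) / 2 + b / 2 \<le> max a b"
  by (auto simp: max_def)

lemma final_real:
  assumes k5: "5 \<le> k" and sj: "sj \<le> real (k + 4)" "0 \<le> sj"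
    and R: "R = nat \<lfloor>real k * (real k - 2) * ln (real k)\<rfloor>"
  shows "(1/2 - 4 / real k) * ((real k * ln (real k)) * sj + real k * real eta)
      \<le> max (real R) (real ((k - 1) * (eta + 1)))"
proof -
  define K where "K = real k"
  define A where "A = 1/2 - 4 / K"
  have K5: "K \<ge> 5" using k5 K_def by simp
  have lK: "ln K \<ge> 1" using ln_ge1[OF k5] K_def by simp
  have e1: "real (k - 1) = K - 1" using k5 unfolding K_def by (simp add: of_nat_diff)
  have m2: "real ((k - 1) * (eta + 1)) = (K - 1) * (real eta + 1)"
    unfolding of_nat_mult e1 by simp
  have nn: "0 \<le> (K * ln K) * sj + K * real eta" using K5 lK sj by simp
  show ?thesis
  proof (cases "A \<le> 0")
    case True
    have "A * ((K * ln K) * sj + K * real eta) \<le> 0" by (rule mult_nonpos_nonneg[OF True nn])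
    also have "0 \<le> max (real R) (real ((k - 1) * (eta + 1)))" by simp
    finally show ?thesis unfolding A_def K_def .
  next
    case False
    hence A0: "A \<ge> 0" by simp
    have fl: "real_of_int \<lfloor>K * (K - 2) * ln K\<rfloor> > K * (K - 2) * ln K - 1"
      using floor_correct[of "K * (K - 2) * ln K"] by linarith
    have X0: "0 \<le> K * (K - 2) * ln K" using K5 lK by simp
    hence "0 \<le> \<lfloor>K * (K - 2) * ln K\<rfloor>" by simp
    hence RR: "real R > K * (K - 2) * ln K - 1" using fl unfolding R K_def by (simp add: of_nat_nat)
    have p1: "A * ((K * ln K) * sj) \<le> A * ((K * ln K) * (K + 4))"
      by (rule mult_left_mono[OF mult_left_mono[OF _ ]]) (use sj K_def K5 lK A0 in auto)
    have "A * ((K * ln K) * (K + 4)) = ((K - 8) * (K + 4) * ln K) / 2"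
      unfolding A_def using K5 by (simp add: field_simps)
    also have "\<dots> \<le> (K * (K - 2) * ln K - 1) / 2"
    proof -
      have "1 \<le> (2 * K + 32) * ln K"
      proof -
        have "1 * 1 \<le> (2 * K + 32) * ln K" by (rule mult_mono) (use K5 lK in auto)
        thus ?thesis by simp
      qed
      moreover have eqd: "K * (K - 2) * ln K - (K - 8) * (K + 4) * ln K = (2 * K + 32) * ln K"
        by (simp add: algebra_simps)
      ultimately have "(K - 8) * (K + 4) * ln K \<le> K * (K - 2) * ln K - 1" by linarith
      thus ?thesis by (rule divide_right_mono) simp
    qed
    also have "\<dots> \<le> real R / 2" by (rule divide_right_mono) (use RR in auto)
    finally have p1': "A * ((K * ln K) * sj) \<le> real R / 2" using p1 by (rule order_trans[rotated])
    have "A * (K * real eta) = (K - 8) / 2 * real eta"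
      unfolding A_def using K5 by (simp add: field_simps)
    also have "\<dots> \<le> (K - 1) * (real eta + 1) / 2"
    proof -
      have "(K - 8) * real eta \<le> (K - 1) * real eta" by (rule mult_right_mono) auto
      also have "\<dots> \<le> (K - 1) * (real eta + 1)" by (rule mult_left_mono) (use K5 in auto)
      finally have "(K - 8) * real eta / 2 \<le> (K - 1) * (real eta + 1) / 2" by (rule divide_right_mono) simp
      thus ?thesis by simp
    qed
    finally have p2: "A * (K * real eta) \<le> real ((k - 1) * (eta + 1)) / 2" using m2 by simp
    have "A * ((K * ln K) * sj + K * real eta) = A * ((K * ln K) * sj) + A * (K * real eta)"
      by (simp add: algebra_simps)
    also have "\<dots> \<le> real R / 2 + real ((k - 1) * (eta + 1)) / 2" using p1' p2 by linarith
    also have "\<dots> \<le> max (real R) (real ((k - 1) * (eta + 1)))" by (rule half_max)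
    finally show ?thesis unfolding A_def K_def .
  qed
qed




lemma main_k:
  assumes pk: "prime k" and k5: "5 \<le> k"
  shows "\<exists>(X :: nat set) (F :: (nat \<Rightarrow> nat) set).
         (\<forall>f\<in>F. \<forall>x\<in>X. f x < k) \<and>
         opt_std X {..<k} F \<noteq> \<infinity> \<and>
         (\<forall>eta::nat.
            ereal ((1/2 - 4 / real k) *
               ((real k * ln (real k)) * real (the_enat (opt_std X {..<k} F)) + real k * real eta))
            \<le> ereal_of_enat (opt_ag X {..<k} F eta))"
proof -
  define n where "n = k + 4"
  have k0: "k > 0" and k2: "k \<ge> 2" using k5 by auto
  obtain dec where bij: "bij_betw dec {0..<card (Vn k n)} (Vn k n)"
    using ex_bij_betw_nat_finite[OF finite_Vn] by blast
  define X where "X = {0..<card (Vn k n)}"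
  define F where "F = fa k n dec ` Vn k n"
  have surj: "\<forall>v\<in>Vn k n. \<exists>x\<in>X. dec x = v"
    using bij unfolding bij_betw_def X_def by (metis imageE)
  have rng: "\<forall>f\<in>F. \<forall>x\<in>X. f x < k"
  proof (intro ballI)
    fix f x assume "f \<in> F" "x \<in> X"
    then obtain a where "f = fa k n dec a" unfolding F_def by blast
    thus "f x < k" using dot_range[OF k0, of n a "dec x"] unfolding fa_def by auto
  qed
  have std: "opt_std X {..<k} F \<le> enat n" by (rule opt_std_le[OF pk F_def])
  then obtain j where j: "opt_std X {..<k} F = enat j" using enat_ile by blast
  have jn: "j \<le> n" using std j by simp
  have ev0: "ev k n 0 \<in> Vn k n" unfolding Vn_def ev_def using k2 by auto
  then obtain x0 where x0: "x0 \<in> X" "dec x0 = ev k n 0" using surj by blast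
  define cv where "cv c = restrict (\<lambda>i. if i = 0 then int c else 0) {..<n}" for c :: nat
  define rep where "rep c = fa k n dec (cv c)" for c
  have reps: "\<forall>c<k. rep c \<in> F \<and> rep c x0 = c"
  proof (intro allI impI conjI)
    fix c assume c: "c < k"
    have "cv c \<in> Vn k n" unfolding Vn_def cv_def using c by auto
    thus "rep c \<in> F" unfolding rep_def F_def by blast
    have "0 < n" unfolding n_def by simp
    hence "dot k n (cv c) (ev k n 0) = cv c 0 mod int k" by (rule dot_ev)
    also have "\<dots> = int c" unfolding cv_def using c \<open>0 < n\<close> by simp
    finally show "rep c x0 = c" unfolding rep_def fa_def using x0 by simp
  qed
  have main: "ereal ((1/2 - 4 / real k) *
               ((real k * ln (real k)) * real (the_enat (opt_std X {..<k} F)) + real k * real eta))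
            \<le> ereal_of_enat (opt_ag X {..<k} F eta)" for eta
  proof -
    define q :: real where "q = 1 - 1 / real k - 1 / (real k)^2"
    define R where "R = nat \<lfloor>real k * (real k - 2) * ln (real k)\<rfloor>"
    have pb: "1 \<le> real k ^ k * q ^ R" by (rule pow_bound[OF k5 q_def R_def])
    have "(real k ^ 2)^2 * 1 \<le> (real k ^ 2)^2 * (real k ^ k * q ^ R)"
      by (rule mult_left_mono[OF pb]) simp
    also have "\<dots> = real (card (Vn k n)) * q ^ R"
    proof -
      have "real (card (Vn k n)) = real k ^ k * real k ^ 4"
        unfolding card_Vn n_def by (simp add: power_add)
      moreover have "(real k ^ 2)^2 = real k ^ 4" by (simp flip: power_mult)
      ultimately show ?thesis by (simp add: algebra_simps)
    qed
    finally have cb: "(real k ^ 2)^2 \<le> real (card (Vn k n)) * q ^ R" by simp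
    have b: "ag_forces X {..<k} F eta (\<lambda>_. 0) (\<lambda>_. 0) (0 + R)"
      by (rule bandit[OF pk k2 F_def surj q_def, of "Vn k n"]) (use cb in auto)
    have sumk: "(\<Sum>c<k. eta + 1 - (\<lambda>_. 0::nat) (rep c)) = k * (eta + 1)" by simp
    have l: "ag_forces X {..<k} F eta (\<lambda>_. 0) (\<lambda>_. 0) (0 + (k * (eta + 1) - 1) - eta)"
      by (rule lies[OF x0(1) reps]) (use k0 sumk in auto)
    obtain i where ki: "k = Suc i" using k0 by (metis gr0_implies_Suc)
    have "0 + (k * (eta + 1) - 1) - eta = (k - 1) * (eta + 1)" unfolding ki by simp
    hence l': "ag_forces X {..<k} F eta (\<lambda>_. 0) (\<lambda>_. 0) ((k - 1) * (eta + 1))" using l by simp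
    have oR: "enat R \<le> opt_ag X {..<k} F eta"
      unfolding opt_ag_def by (rule Sup_upper) (use b in auto)
    have om: "enat ((k - 1) * (eta + 1)) \<le> opt_ag X {..<k} F eta"
      unfolding opt_ag_def by (rule Sup_upper) (use l' in auto)
    have fr: "(1/2 - 4 / real k) * ((real k * ln (real k)) * real j + real k * real eta)
      \<le> max (real R) (real ((k - 1) * (eta + 1)))"
      by (rule final_real[OF k5 _ _ R_def]) (use jn n_def in auto)
    have "ereal (max (real R) (real ((k - 1) * (eta + 1)))) \<le> ereal_of_enat (opt_ag X {..<k} F eta)"
    proof (cases "real R \<le> real ((k - 1) * (eta + 1))")
      case True
      hence "ereal (max (real R) (real ((k - 1) * (eta + 1)))) = ereal_of_enat (enat ((k - 1) * (eta + 1)))"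
        by simp
      also have "\<dots> \<le> ereal_of_enat (opt_ag X {..<k} F eta)" using om by (simp only: ereal_of_enat_le_iff)
      finally show ?thesis .
    next
      case False
      hence "ereal (max (real R) (real ((k - 1) * (eta + 1)))) = ereal_of_enat (enat R)"
        by simp
      also have "\<dots> \<le> ereal_of_enat (opt_ag X {..<k} F eta)" using oR by (simp only: ereal_of_enat_le_iff)
      finally show ?thesis .
    qed
    moreover have "ereal ((1/2 - 4 / real k) * ((real k * ln (real k)) * real j + real k * real eta))
      \<le> ereal (max (real R) (real ((k - 1) * (eta + 1))))" using fr by (simp only: ereal_less_eq(3))
    ultimately have "ereal ((1/2 - 4 / real k) * ((real k * ln (real k)) * real j + real k * real eta))
      \<le> ereal_of_enat (opt_ag X {..<k} F eta)" by (rule order_trans[rotated])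
    thus ?thesis unfolding j by simp
  qed
  show ?thesis
    by (rule exI[of _ X], rule exI[of _ F]) (use rng j main in auto)
qed

theorem mainTheorem7:
  shows "\<exists>\<epsilon> :: nat \<Rightarrow> real. \<epsilon> \<longlonglongrightarrow> 0 \<and>
    (\<forall>k::nat. prime k \<and> 5 \<le> k \<longrightarrow>
      (\<exists>(X :: nat set) (F :: (nat \<Rightarrow> nat) set).
         (\<forall>f\<in>F. \<forall>x\<in>X. f x < k) \<and>
         opt_std X {..<k} F \<noteq> \<infinity> \<and>
         (\<forall>eta::nat.
            ereal ((1/2 - \<epsilon> k) *
               ((real k * ln (real k)) * real (the_enat (opt_std X {..<k} F)) + real k * real eta))
            \<le> ereal_of_enat (opt_ag X {..<k} F eta))))"
proof (rule exI[of _ "\<lambda>k. 4 / real k"], intro conjI allI impI)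
  have "(\<lambda>k. 4 * (1 / real k)) \<longlonglongrightarrow> 4 * 0"
    by (intro tendsto_mult tendsto_const lim_inverse_n')
  thus "(\<lambda>k. 4 / real k) \<longlonglongrightarrow> 0" by simp
next
  fix k :: nat assume "prime k \<and> 5 \<le> k"
  thus "\<exists>(X :: nat set) (F :: (nat \<Rightarrow> nat) set).
         (\<forall>f\<in>F. \<forall>x\<in>X. f x < k) \<and>
         opt_std X {..<k} F \<noteq> \<infinity> \<and>
         (\<forall>eta::nat.
            ereal ((1/2 - 4 / real k) *
               ((real k * ln (real k)) * real (the_enat (opt_std X {..<k} F)) + real k * real eta))
            \<le> ereal_of_enat (opt_ag X {..<k} F eta))"
    using main_k by blast
qed


end
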